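(* For every integer $N\ge 0$, let $T_{1\times 3}(6,N)$ be the number of tilings of a $6\times n$ rectangle, $n=N/2$, by $N$ tiles of size $1\times 3$ (and $0$ if $N$ is odd). Then, as formal power series, \[ \sum_{N\ge 0} T_{1\times 3}(6,N)\,z^N=\frac{(1-z^6)^2(1-z^4-z^6)}{1-z^2-z^4-7z^6+z^8+5z^{10}+10z^{12}+z^{14}-3z^{16}-5z^{18}-z^{20}+z^{22}+z^{24}}. \]
   Context: A tiling of an $m\times n$ rectangle (width $m$, length $n$, made of $mn$ unit squares) by $a\times b$ tiles is a partition of the rectangle into non-overlapping axis-parallel $a\times b$ rectangles with integer corner coordinates, each placed in either of its two orientations. Tilings related by reflections or rotations of the rectangle are counted as distinct. The empty tiling counts once for $N=0$. *)

theory Defs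
  imports "HOL-Computational_Algebra.Computational_Algebra"
begin

text \<open>Unit squares are identified with their lower-left corners (x, y) in nat x nat.
  The m x n rectangle (width m, length n) is the set of cells {0..<m} x {0..<n}.\<close>

definition rect_cells :: "nat \<Rightarrow> nat \<Rightarrow> nat \<Rightarrow> nat \<Rightarrow> (nat \<times> nat) set" where
  "rect_cells x y w h = {x..<x+w} \<times> {y..<y+h}"

definition rectangle :: "nat \<Rightarrow> nat \<Rightarrow> (nat \<times> nat) set" where
  "rectangle m n = {0..<m} \<times> {0..<n}"

definition is_tile :: "nat \<Rightarrow> nat \<Rightarrow> (nat \<times> nat) set \<Rightarrow> bool" where
  "is_tile a b t \<longleftrightarrow> (\<exists>x y. t = rect_cells x y a b \<or> t = rect_cells x y b a)"

definition is_tiling :: "nat \<Rightarrow> nat \<Rightarrow> nat \<Rightarrow> nat \<Rightarrow> (nat \<times> nat) set set \<Rightarrow> bool" where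
  "is_tiling a b m n P \<longleftrightarrow>
     finite P \<and> (\<forall>t\<in>P. is_tile a b t) \<and>
     (\<forall>t\<in>P. \<forall>s\<in>P. t \<noteq> s \<longrightarrow> t \<inter> s = {}) \<and>
     \<Union>P = rectangle m n"

definition T_count :: "nat \<Rightarrow> nat \<Rightarrow> nat \<Rightarrow> nat \<Rightarrow> nat" where
  "T_count a b m N =
     (if even N then card {P. is_tiling a b m (N div 2) P \<and> card P = N} else 0)"

end

theory Submission imports Defs begin

fun lmin :: "nat list \<Rightarrow> nat" where
  "lmin [] = 0" | "lmin [x] = x" | "lmin (x#y#xs) = min x (lmin (y#xs))"

fun fidx :: "nat \<Rightarrow> nat list \<Rightarrow> nat" where
  "fidx y [] = 0" | "fidx y (a#l) = (if a = y then 0 else Suc (fidx y l))"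

lemma lmin_in: "h \<noteq> [] \<Longrightarrow> lmin h \<in> set h"
  by (induction h rule: lmin.induct) (auto simp: min_def)

lemma lmin_le: "x \<in> set h \<Longrightarrow> lmin h \<le> x"
  by (induction h rule: lmin.induct) auto

lemma fidx_lt: "y \<in> set h \<Longrightarrow> fidx y h < length h"
  by (induction h) auto

lemma fidx_nth: "y \<in> set h \<Longrightarrow> h ! fidx y h = y"
  by (induction h) auto

lemma fidx_min: "i < fidx y h \<Longrightarrow> h ! i \<noteq> y"
  by (induction h arbitrary: i) (auto simp: nth_Cons split: nat.splits if_splits)

lemma sum_upd: "i < length h \<Longrightarrow>
   sum_list (map f (h[i:=v])) + f (h!i) = sum_list (map f h) + (f v :: nat)"
  by (induction h arbitrary: i) (auto split: nat.splits simp: nth_Cons)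

function G :: "nat list \<Rightarrow> nat \<Rightarrow> nat" where
"G h n = (if h = [] \<or> n \<le> lmin h then 1 else
  (let y0 = lmin h; x0 = fidx y0 h in
   (if x0 + 2 < length h \<and> h!(x0+1) = y0 \<and> h!(x0+2) = y0
      then G (h[x0:=y0+1, x0+1:=y0+1, x0+2:=y0+1]) n else 0)
   + (if y0 + 3 \<le> n then G (h[x0:=y0+3]) n else 0)))"
  by pat_completeness auto
termination
proof (relation "measure (\<lambda>(h,n). sum_list (map (\<lambda>x. n - x) h))", goal_cases)
  case 1 then show ?case by (rule wf_measure)
next
  case (2 h n y0 x0)
  have ne: "h \<noteq> []" and lt: "lmin h < n" using 2(1) by auto
  have y0: "y0 = lmin h" and x0d: "x0 = fidx y0 h" using 2(2,3) by auto
  have c: "x0 + 2 < length h" "h!(x0+1) = y0" "h!(x0+2) = y0" using 2(4) by auto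
  have x0: "x0 < length h" "h!x0 = y0" using y0 x0d lmin_in[OF ne] fidx_lt fidx_nth by auto
  define f where "f = (\<lambda>x::nat. n - x)"
  define h1 where "h1 = h[x0:=y0+1]"
  define h2 where "h2 = h1[x0+1:=y0+1]"
  define h3 where "h3 = h2[x0+2:=y0+1]"
  have a: "sum_list (map f h1) + f (h!x0) = sum_list (map f h) + f (y0+1)"
    unfolding h1_def by (rule sum_upd) (rule x0(1))
  have b: "sum_list (map f h2) + f (h1!(x0+1)) = sum_list (map f h1) + f (y0+1)"
    unfolding h2_def by (rule sum_upd) (use c h1_def in simp)
  have c': "sum_list (map f h3) + f (h2!(x0+2)) = sum_list (map f h2) + f (y0+1)"
    unfolding h3_def by (rule sum_upd) (use c h1_def h2_def in simp)
  have e1: "h1!(x0+1) = y0" using c unfolding h1_def by simp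
  have e2: "h2!(x0+2) = y0" using c unfolding h1_def h2_def by simp
  have lt2: "f (y0+1) < f y0" using lt y0 unfolding f_def by simp
  have "sum_list (map f h3) < sum_list (map f h)"
    using a[unfolded x0(2)] b[unfolded e1] c'[unfolded e2] lt2 by linarith
  then show ?case unfolding f_def h1_def h2_def h3_def by simp
next
  case (3 h n y0 x0)
  have ne: "h \<noteq> []" and lt: "lmin h < n" using 3(1) by auto
  have y0: "y0 = lmin h" and x0d: "x0 = fidx y0 h" using 3(2,3) by auto
  have x0: "x0 < length h" "h!x0 = y0" using y0 x0d lmin_in[OF ne] fidx_lt fidx_nth by auto
  define f where "f = (\<lambda>x::nat. n - x)"
  have a: "sum_list (map f (h[x0:=y0+3])) + f (h!x0) = sum_list (map f h) + f (y0+3)"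
    by (rule sum_upd) (rule x0(1))
  have lt2: "f (y0+3) < f y0" using lt y0 3(4) unfolding f_def by simp
  have "sum_list (map f (h[x0:=y0+3])) < sum_list (map f h)"
    using a[unfolded x0(2)] lt2 by linarith
  then show ?case unfolding f_def by simp
qed


declare G.simps[simp del]

lemma G_unf0: "lmin h = 0 \<Longrightarrow> h \<noteq> [] \<Longrightarrow> 0 < n \<Longrightarrow> G h n =
   (let x0 = fidx 0 h in
   (if x0 + 2 < length h \<and> h!(x0+1) = 0 \<and> h!(x0+2) = 0
      then G (h[x0:=1, x0+1:=1, x0+2:=1]) n else 0)
   + (if 3 \<le> n then G (h[x0:=3]) n else 0))"
  by (subst G.simps) (simp add: Let_def)


definition tilings :: "(nat \<times> nat) set \<Rightarrow> (nat \<times> nat) set set set" where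
  "tilings \<Omega> = {P. finite P \<and> (\<forall>t\<in>P. is_tile 1 3 t) \<and>
     (\<forall>t\<in>P. \<forall>s\<in>P. t \<noteq> s \<longrightarrow> t \<inter> s = {}) \<and> \<Union>P = \<Omega>}"

lemma tilings_finite: "finite \<Omega> \<Longrightarrow> finite (tilings \<Omega>)"
proof -
  assume f: "finite \<Omega>"
  have "tilings \<Omega> \<subseteq> Pow (Pow \<Omega>)" unfolding tilings_def by auto
  then show ?thesis using f by (meson finite_Pow_iff rev_finite_subset)
qed

lemma tile_nonempty: assumes "is_tile 1 3 t" shows "t \<noteq> {}"
proof -
  obtain x y where "t = rect_cells x y 1 3 \<or> t = rect_cells x y 3 1" using assms is_tile_def by blast
  then have "(x,y) \<in> t" unfolding rect_cells_def by auto
  then show ?thesis by auto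
qed

lemma tilings_iff: "P \<in> tilings \<Omega> \<longleftrightarrow> finite P \<and> (\<forall>t\<in>P. is_tile 1 3 t) \<and>
     (\<forall>t\<in>P. \<forall>s\<in>P. t \<noteq> s \<longrightarrow> t \<inter> s = {}) \<and> \<Union>P = \<Omega>"
  unfolding tilings_def by simp

lemma card_with:
  assumes tau: "is_tile 1 3 \<tau>" and fin: "finite \<Omega>"
  shows "card {P\<in>tilings \<Omega>. \<tau> \<in> P} = (if \<tau> \<subseteq> \<Omega> then card (tilings (\<Omega> - \<tau>)) else 0)"
proof (cases "\<tau> \<subseteq> \<Omega>")
  case False
  have "\<tau> \<in> P \<Longrightarrow> P \<in> tilings \<Omega> \<Longrightarrow> False" for P
  proof -
    assume "\<tau> \<in> P" "P \<in> tilings \<Omega>"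
    then have "\<tau> \<subseteq> \<Union>P" "\<Union>P = \<Omega>" unfolding tilings_iff by blast+
    then show False using False by simp
  qed
  then have e: "{P\<in>tilings \<Omega>. \<tau> \<in> P} = {}" by blast
  show ?thesis unfolding e using False by simp
next
  case True
  have ne: "\<tau> \<noteq> {}" using tile_nonempty tau by blast
  have notin: "\<tau> \<notin> P'" if "P' \<in> tilings (\<Omega> - \<tau>)" for P'
  proof
    assume "\<tau> \<in> P'"
    then have "\<tau> \<subseteq> \<Union>P'" by blast
    also have "\<Union>P' = \<Omega> - \<tau>" using that unfolding tilings_iff by blast
    finally show False using ne by blast
  qed
  have inj: "inj_on (insert \<tau>) (tilings (\<Omega> - \<tau>))"
  proof (rule inj_onI)
    fix A B assume "A \<in> tilings (\<Omega> - \<tau>)" "B \<in> tilings (\<Omega> - \<tau>)" "insert \<tau> A = insert \<tau> B"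
    then show "A = B" using notin by (metis insert_ident)
  qed
  have eq: "{P\<in>tilings \<Omega>. \<tau> \<in> P} = insert \<tau> ` tilings (\<Omega> - \<tau>)"
  proof
    show "insert \<tau> ` tilings (\<Omega> - \<tau>) \<subseteq> {P\<in>tilings \<Omega>. \<tau> \<in> P}"
    proof
      fix P assume "P \<in> insert \<tau> ` tilings (\<Omega> - \<tau>)"
      then obtain P' where P': "P' \<in> tilings (\<Omega> - \<tau>)" and PP: "P = insert \<tau> P'" by blast
      have f: "finite P'" and t: "\<forall>t\<in>P'. is_tile 1 3 t"
        and d: "\<forall>t\<in>P'. \<forall>s\<in>P'. t \<noteq> s \<longrightarrow> t \<inter> s = {}" and u: "\<Union>P' = \<Omega> - \<tau>"
        using P' unfolding tilings_iff by blast+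
      have dt: "\<forall>t\<in>P'. t \<inter> \<tau> = {}" using u by blast
      have "P \<in> tilings \<Omega>" unfolding tilings_iff PP
      proof (intro conjI)
        show "finite (insert \<tau> P')" using f by simp
        show "\<forall>t\<in>insert \<tau> P'. is_tile 1 3 t" using t tau by simp
        show "\<forall>t\<in>insert \<tau> P'. \<forall>s\<in>insert \<tau> P'. t \<noteq> s \<longrightarrow> t \<inter> s = {}"
          using d dt by blast
        show "\<Union>(insert \<tau> P') = \<Omega>" using u True by blast
      qed
      then show "P \<in> {P\<in>tilings \<Omega>. \<tau> \<in> P}" using PP by simp
    qed
  next
    show "{P\<in>tilings \<Omega>. \<tau> \<in> P} \<subseteq> insert \<tau> ` tilings (\<Omega> - \<tau>)"
    proof
      fix P assume P: "P \<in> {P\<in>tilings \<Omega>. \<tau> \<in> P}"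
      then have tP: "\<tau> \<in> P" and PT: "P \<in> tilings \<Omega>" by auto
      have f: "finite P" and t: "\<forall>t\<in>P. is_tile 1 3 t"
        and d: "\<forall>t\<in>P. \<forall>s\<in>P. t \<noteq> s \<longrightarrow> t \<inter> s = {}" and u: "\<Union>P = \<Omega>"
        using PT unfolding tilings_iff by blast+
      have "P - {\<tau>} \<in> tilings (\<Omega> - \<tau>)" unfolding tilings_iff
      proof (intro conjI)
        show "finite (P - {\<tau>})" using f by simp
        show "\<forall>t\<in>P - {\<tau>}. is_tile 1 3 t" using t by simp
        show "\<forall>t\<in>P - {\<tau>}. \<forall>s\<in>P - {\<tau>}. t \<noteq> s \<longrightarrow> t \<inter> s = {}" using d by blast
        show "\<Union>(P - {\<tau>}) = \<Omega> - \<tau>"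
        proof
          show "\<Union>(P - {\<tau>}) \<subseteq> \<Omega> - \<tau>" using d tP u by blast
          show "\<Omega> - \<tau> \<subseteq> \<Union>(P - {\<tau>})" using u by blast
        qed
      qed
      moreover have "P = insert \<tau> (P - {\<tau>})" using tP by auto
      ultimately show "P \<in> insert \<tau> ` tilings (\<Omega> - \<tau>)" by blast
    qed
  qed
  show ?thesis using True eq inj by (simp add: card_image)
qed

lemma card_tilings_step:
  assumes fin: "finite \<Omega>" and c: "(x,y) \<in> \<Omega>"
    and minc: "\<And>x' y'. (x',y') \<in> \<Omega> \<Longrightarrow> y < y' \<or> (y = y' \<and> x \<le> x')"
  shows "card (tilings \<Omega>) =
     (if rect_cells x y 3 1 \<subseteq> \<Omega> then card (tilings (\<Omega> - rect_cells x y 3 1)) else 0)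
   + (if rect_cells x y 1 3 \<subseteq> \<Omega> then card (tilings (\<Omega> - rect_cells x y 1 3)) else 0)"
proof -
  let ?H = "rect_cells x y 3 1" and ?V = "rect_cells x y 1 3"
  have tH: "is_tile 1 3 ?H" and tV: "is_tile 1 3 ?V" unfolding is_tile_def by auto
  have h1: "(Suc x, y) \<in> ?H" and h2: "(Suc x, y) \<notin> ?V" unfolding rect_cells_def by auto
  have HV: "?H \<noteq> ?V" using h1 h2 by blast
  have cH: "(x,y) \<in> ?H" and cV: "(x,y) \<in> ?V" unfolding rect_cells_def by auto
  have split: "tilings \<Omega> = {P\<in>tilings \<Omega>. ?H \<in> P} \<union> {P\<in>tilings \<Omega>. ?V \<in> P}"
  proof
    show "tilings \<Omega> \<subseteq> {P\<in>tilings \<Omega>. ?H \<in> P} \<union> {P\<in>tilings \<Omega>. ?V \<in> P}"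
    proof
      fix P assume PT: "P \<in> tilings \<Omega>"
      have tl: "\<forall>t\<in>P. is_tile 1 3 t" and u: "\<Union>P = \<Omega>" using PT unfolding tilings_iff by blast+
      obtain t where t: "t \<in> P" "(x,y) \<in> t" using c u by blast
      have tt: "is_tile 1 3 t" using tl t by blast
      have tsub: "t \<subseteq> \<Omega>" using u t by blast
      obtain x' y' where xy: "t = rect_cells x' y' 1 3 \<or> t = rect_cells x' y' 3 1"
        using tt unfolding is_tile_def by blast
      have corner: "(x',y') \<in> t" using xy unfolding rect_cells_def by auto
      have le: "x' \<le> x" "y' \<le> y" using xy t(2) unfolding rect_cells_def by auto
      have "y < y' \<or> (y = y' \<and> x \<le> x')" using minc corner tsub by blast
      then have "x' = x" "y' = y" using le by auto
      then have "t = ?H \<or> t = ?V" using xy by auto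
      then show "P \<in> {P\<in>tilings \<Omega>. ?H \<in> P} \<union> {P\<in>tilings \<Omega>. ?V \<in> P}" using PT t by auto
    qed
  qed blast
  have disj: "{P\<in>tilings \<Omega>. ?H \<in> P} \<inter> {P\<in>tilings \<Omega>. ?V \<in> P} = {}"
  proof -
    have False if "P \<in> tilings \<Omega>" "?H \<in> P" "?V \<in> P" for P
    proof -
      have d: "\<forall>t\<in>P. \<forall>s\<in>P. t \<noteq> s \<longrightarrow> t \<inter> s = {}" using that(1) unfolding tilings_iff by blast
      then have "?H \<inter> ?V = {}" using that(2,3) HV by blast
      then show False using cH cV by blast
    qed
    then show ?thesis by blast
  qed
  have fins: "finite {P\<in>tilings \<Omega>. ?H \<in> P}" "finite {P\<in>tilings \<Omega>. ?V \<in> P}"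
    using tilings_finite[OF fin] by auto
  have "card (tilings \<Omega>) = card {P\<in>tilings \<Omega>. ?H \<in> P} + card {P\<in>tilings \<Omega>. ?V \<in> P}"
    by (subst split) (rule card_Un_disjoint[OF fins disj])
  then show ?thesis using card_with[OF tH fin] card_with[OF tV fin] by simp
qed

definition reg :: "nat list \<Rightarrow> nat \<Rightarrow> (nat \<times> nat) set" where
  "reg h n = {(x,y). x < length h \<and> h!x \<le> y \<and> y < n}"

lemma reg_finite: "finite (reg h n)"
  by (rule finite_subset[of _ "{..<length h} \<times> {..<n}"]) (auto simp: reg_def)

lemma tilings_empty: "tilings {} = {{}}"
  unfolding tilings_def using tile_nonempty by auto

lemma G_correct: "G h n = card (tilings (reg h n))"
proof (induction h n rule: G.induct)
  case (1 h n)
  show ?case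
  proof (cases "h = [] \<or> n \<le> lmin h")
    case True
    have "reg h n = {}"
    proof -
      have "\<not> (x < length h \<and> h!x \<le> y \<and> y < n)" for x y
        using True lmin_le[of "h!x" h] by (auto simp: nth_mem)
      then show ?thesis unfolding reg_def by auto
    qed
    then show ?thesis using True by (subst G.simps) (simp add: tilings_empty)
  next
    case False
    define y0 where "y0 = lmin h"
    define x0 where "x0 = fidx y0 h"
    have ne: "h \<noteq> []" and lt: "y0 < n" using False y0_def by auto
    have y0in: "y0 \<in> set h" using lmin_in[OF ne] y0_def by simp
    have x0: "x0 < length h" "h!x0 = y0" using fidx_lt[OF y0in] fidx_nth[OF y0in] x0_def by auto
    have ge: "\<And>i. i < length h \<Longrightarrow> y0 \<le> h!i" using lmin_le y0_def by (simp add: nth_mem)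
    have bef: "\<And>i. i < x0 \<Longrightarrow> h!i \<noteq> y0" using fidx_min x0_def by blast
    have c: "(x0,y0) \<in> reg h n" using x0 lt by (auto simp: reg_def)
    have minc: "y0 < y' \<or> (y0 = y' \<and> x0 \<le> x')" if "(x',y') \<in> reg h n" for x' y'
    proof -
      have a: "x' < length h" "h!x' \<le> y'" using that by (auto simp: reg_def)
      then have "y0 \<le> y'" using ge[of x'] by auto
      moreover have "y0 = y' \<Longrightarrow> x0 \<le> x'" using a ge[of x'] bef[of x'] by (cases "x' < x0") auto
      ultimately show ?thesis by auto
    qed
    note step = card_tilings_step[OF reg_finite c minc]
    let ?cH = "x0 + 2 < length h \<and> h!(x0+1) = y0 \<and> h!(x0+2) = y0"
    let ?hH = "h[x0:=y0+1, x0+1:=y0+1, x0+2:=y0+1]"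
    have Hsub: "rect_cells x0 y0 3 1 \<subseteq> reg h n \<longleftrightarrow> ?cH"
    proof
      assume s: "rect_cells x0 y0 3 1 \<subseteq> reg h n"
      have "(x0+2, y0) \<in> reg h n" "(x0+1, y0) \<in> reg h n"
        using s unfolding rect_cells_def by auto
      then show ?cH using ge unfolding reg_def by (auto simp: le_antisym)
    next
      assume ?cH
      then show "rect_cells x0 y0 3 1 \<subseteq> reg h n" using x0 lt
        unfolding rect_cells_def reg_def by (auto simp: less_Suc_eq numeral_3_eq_3)
    qed
    have Hreg: "reg h n - rect_cells x0 y0 3 1 = reg ?hH n" if ?cH
    proof -
      have "(x,y) \<in> reg h n - rect_cells x0 y0 3 1 \<longleftrightarrow> (x,y) \<in> reg ?hH n" for x y
      proof -
        consider "x = x0" | "x = x0+1" | "x = x0+2" | "x \<noteq> x0 \<and> x \<noteq> x0+1 \<and> x \<noteq> x0+2" by blast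
        then show ?thesis using that x0
          unfolding rect_cells_def reg_def by cases (auto simp: nth_list_update)
      qed
      then show ?thesis by auto
    qed
    let ?hV = "h[x0:=y0+3]"
    have Vsub: "rect_cells x0 y0 1 3 \<subseteq> reg h n \<longleftrightarrow> y0 + 3 \<le> n"
    proof
      assume s: "rect_cells x0 y0 1 3 \<subseteq> reg h n"
      have "(x0, y0+2) \<in> reg h n" using s unfolding rect_cells_def by auto
      then show "y0 + 3 \<le> n" unfolding reg_def by auto
    next
      assume "y0 + 3 \<le> n"
      then show "rect_cells x0 y0 1 3 \<subseteq> reg h n" using x0
        unfolding rect_cells_def reg_def by auto
    qed
    have Vreg: "reg h n - rect_cells x0 y0 1 3 = reg ?hV n" if "y0 + 3 \<le> n"
    proof -
      have "(x,y) \<in> reg h n - rect_cells x0 y0 1 3 \<longleftrightarrow> (x,y) \<in> reg ?hV n" for x y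
        using that x0 unfolding rect_cells_def reg_def
        by (cases "x = x0") (auto simp: nth_list_update)
      then show ?thesis by auto
    qed
    have IH1: "?cH \<Longrightarrow> G ?hH n = card (tilings (reg ?hH n))"
      using "1.IH"(1)[OF False y0_def x0_def] by simp
    have IH2: "y0 + 3 \<le> n \<Longrightarrow> G ?hV n = card (tilings (reg ?hV n))"
      using "1.IH"(2)[OF False y0_def x0_def] by simp
    have "G h n = (if ?cH then G ?hH n else 0) + (if y0 + 3 \<le> n then G ?hV n else 0)"
      using False by (subst G.simps) (simp add: Let_def y0_def x0_def)
    also have "\<dots> = card (tilings (reg h n))"
      using step Hsub Hreg Vsub Vreg IH1 IH2 by auto
    finally show ?thesis .
  qed
qed


lemma lmin_Suc: "lmin (map Suc h) = (if h = [] then 0 else Suc (lmin h))"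
  by (induction h rule: lmin.induct) auto

lemma fidx_Suc: "fidx (Suc y) (map Suc h) = fidx y h"
  by (induction h) auto

lemma G_shift: "G (map Suc h) (Suc n) = G h n"
proof (induction h n rule: G.induct)
  case (1 h n)
  show ?case
  proof (cases "h = [] \<or> n \<le> lmin h")
    case True
    then show ?thesis by (subst (1 2) G.simps) (auto simp: lmin_Suc)
  next
    case False
    define y0 where "y0 = lmin h"
    define x0 where "x0 = fidx y0 h"
    let ?cH = "x0 + 2 < length h \<and> h!(x0+1) = y0 \<and> h!(x0+2) = y0"
    let ?hH = "h[x0:=y0+1, x0+1:=y0+1, x0+2:=y0+1]"
    let ?hV = "h[x0:=y0+3]"
    have ne: "h \<noteq> []" using False by auto
    have e1: "(map Suc h)[x0:=Suc y0+1, x0+1:=Suc y0+1, x0+2:=Suc y0+1] = map Suc ?hH"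
      by (simp add: map_update)
    have e2: "(map Suc h)[x0:=Suc y0+3] = map Suc ?hV"
      by (simp add: map_update)
    have c1: "(x0 + 2 < length (map Suc h) \<and> (map Suc h)!(x0+1) = Suc y0 \<and> (map Suc h)!(x0+2) = Suc y0) = ?cH"
      by auto
    have c2: "(Suc y0 + 3 \<le> Suc n) = (y0 + 3 \<le> n)" by arith
    have L: "lmin (map Suc h) = Suc y0" using ne y0_def by (simp add: lmin_Suc)
    have F: "fidx (Suc y0) (map Suc h) = x0" using x0_def by (simp add: fidx_Suc)
    have c0: "\<not> (map Suc h = [] \<or> Suc n \<le> Suc y0)" using False ne y0_def by auto
    have "G (map Suc h) (Suc n) = (if x0 + 2 < length (map Suc h) \<and> (map Suc h)!(x0+1) = Suc y0 \<and> (map Suc h)!(x0+2) = Suc y0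
          then G ((map Suc h)[x0:=Suc y0+1, x0+1:=Suc y0+1, x0+2:=Suc y0+1]) (Suc n) else 0)
        + (if Suc y0 + 3 \<le> Suc n then G ((map Suc h)[x0:=Suc y0+3]) (Suc n) else 0)"
      by (subst G.simps) (simp only: L F Let_def if_not_P[OF c0])
    also have "\<dots> = (if ?cH then G (map Suc ?hH) (Suc n) else 0)
        + (if y0 + 3 \<le> n then G (map Suc ?hV) (Suc n) else 0)"
      by (simp only: e1 e2 c1 c2)
    also have "\<dots> = (if ?cH then G ?hH n else 0) + (if y0 + 3 \<le> n then G ?hV n else 0)"
      using "1.IH"(1)[OF False y0_def x0_def] "1.IH"(2)[OF False y0_def x0_def] by simp
    also have "\<dots> = G h n"
      using False by (subst (2) G.simps) (simp add: Let_def y0_def x0_def)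
    finally show ?thesis .
  qed
qed

lemma tile_card: assumes "is_tile 1 3 t" shows "card t = 3"
proof -
  obtain x y where "t = rect_cells x y 1 3 \<or> t = rect_cells x y 3 1" using assms is_tile_def by blast
  then show ?thesis unfolding rect_cells_def by (auto simp: card_cartesian_product)
qed

lemma T_count_G: "T_count 1 3 6 N = (if even N then G [0,0,0,0,0,0] (N div 2) else 0)"
proof (cases "even N")
  case True
  define m where "m = N div 2"
  have N: "N = 2 * m" using True m_def by auto
  have z: "[0,0,0,0,0,0::nat] = replicate 6 0" by (simp add: numeral_eq_Suc)
  have rect: "rectangle 6 m = reg [0,0,0,0,0,0] m"
    unfolding rectangle_def reg_def z by auto
  have cardP: "card P = N" if "P \<in> tilings (rectangle 6 m)" for P
  proof -
    have fin: "finite P" and un: "\<Union>P = rectangle 6 m" and tl: "\<And>t. t \<in> P \<Longrightarrow> is_tile 1 3 t"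
      and dj: "pairwise disjnt P"
      using that unfolding tilings_def pairwise_def disjnt_def by auto
    have "card (\<Union>P) = sum card P"
      by (rule card_Union_disjoint[OF dj]) (metis tl tile_card card.infinite zero_neq_numeral)
    also have "\<dots> = sum (\<lambda>_. 3) P" using tl tile_card by (intro sum.cong) auto
    also have "\<dots> = 3 * card P" by simp
    finally have "3 * card P = 6 * m" using un unfolding rectangle_def by (simp add: card_cartesian_product)
    then show ?thesis using N by simp
  qed
  have "{P. is_tiling 1 3 6 m P \<and> card P = N} = tilings (rectangle 6 m)"
    using cardP unfolding is_tiling_def tilings_def by auto
  then show ?thesis unfolding T_count_def using True m_def rect G_correct by simp
next
  case False
  then show ?thesis unfolding T_count_def by simp
qed



lemma m000000: "map Suc [0,0,0,0,0,0] = [1,1,1,1,1,1]" by simp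
lemma sh000000: "G [1,1,1,1,1,1] (Suc n) = G [0,0,0,0,0,0] n"
  using G_shift[of "[0,0,0,0,0,0]" n] by (simp only: m000000)

lemma m000111: "map Suc [0,0,0,1,1,1] = [1,1,1,2,2,2]" by simp
lemma sh000111: "G [1,1,1,2,2,2] (Suc n) = G [0,0,0,1,1,1] n"
  using G_shift[of "[0,0,0,1,1,1]" n] by (simp only: m000111)

lemma m000222: "map Suc [0,0,0,2,2,2] = [1,1,1,3,3,3]" by simp
lemma sh000222: "G [1,1,1,3,3,3] (Suc n) = G [0,0,0,2,2,2] n"
  using G_shift[of "[0,0,0,2,2,2]" n] by (simp only: m000222)

lemma m001110: "map Suc [0,0,1,1,1,0] = [1,1,2,2,2,1]" by simp
lemma sh001110: "G [1,1,2,2,2,1] (Suc n) = G [0,0,1,1,1,0] n"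
  using G_shift[of "[0,0,1,1,1,0]" n] by (simp only: m001110)

lemma m002220: "map Suc [0,0,2,2,2,0] = [1,1,3,3,3,1]" by simp
lemma sh002220: "G [1,1,3,3,3,1] (Suc n) = G [0,0,2,2,2,0] n"
  using G_shift[of "[0,0,2,2,2,0]" n] by (simp only: m002220)

lemma m011100: "map Suc [0,1,1,1,0,0] = [1,2,2,2,1,1]" by simp
lemma sh011100: "G [1,2,2,2,1,1] (Suc n) = G [0,1,1,1,0,0] n"
  using G_shift[of "[0,1,1,1,0,0]" n] by (simp only: m011100)

lemma m022200: "map Suc [0,2,2,2,0,0] = [1,3,3,3,1,1]" by simp
lemma sh022200: "G [1,3,3,3,1,1] (Suc n) = G [0,2,2,2,0,0] n"
  using G_shift[of "[0,2,2,2,0,0]" n] by (simp only: m022200)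

lemma m100011: "map Suc [1,0,0,0,1,1] = [2,1,1,1,2,2]" by simp
lemma sh100011: "G [2,1,1,1,2,2] (Suc n) = G [1,0,0,0,1,1] n"
  using G_shift[of "[1,0,0,0,1,1]" n] by (simp only: m100011)

lemma m110001: "map Suc [1,1,0,0,0,1] = [2,2,1,1,1,2]" by simp
lemma sh110001: "G [2,2,1,1,1,2] (Suc n) = G [1,1,0,0,0,1] n"
  using G_shift[of "[1,1,0,0,0,1]" n] by (simp only: m110001)

lemma m111000: "map Suc [1,1,1,0,0,0] = [2,2,2,1,1,1]" by simp
lemma sh111000: "G [2,2,2,1,1,1] (Suc n) = G [1,1,1,0,0,0] n"
  using G_shift[of "[1,1,1,0,0,0]" n] by (simp only: m111000)

lemma m111111: "map Suc [1,1,1,1,1,1] = [2,2,2,2,2,2]" by simp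
lemma sh111111: "G [2,2,2,2,2,2] (Suc n) = G [1,1,1,1,1,1] n"
  using G_shift[of "[1,1,1,1,1,1]" n] by (simp only: m111111)

lemma m111222: "map Suc [1,1,1,2,2,2] = [2,2,2,3,3,3]" by simp
lemma sh111222: "G [2,2,2,3,3,3] (Suc n) = G [1,1,1,2,2,2] n"
  using G_shift[of "[1,1,1,2,2,2]" n] by (simp only: m111222)

lemma m112221: "map Suc [1,1,2,2,2,1] = [2,2,3,3,3,2]" by simp
lemma sh112221: "G [2,2,3,3,3,2] (Suc n) = G [1,1,2,2,2,1] n"
  using G_shift[of "[1,1,2,2,2,1]" n] by (simp only: m112221)

lemma m122211: "map Suc [1,2,2,2,1,1] = [2,3,3,3,2,2]" by simp
lemma sh122211: "G [2,3,3,3,2,2] (Suc n) = G [1,2,2,2,1,1] n"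
  using G_shift[of "[1,2,2,2,1,1]" n] by (simp only: m122211)

lemma m200022: "map Suc [2,0,0,0,2,2] = [3,1,1,1,3,3]" by simp
lemma sh200022: "G [3,1,1,1,3,3] (Suc n) = G [2,0,0,0,2,2] n"
  using G_shift[of "[2,0,0,0,2,2]" n] by (simp only: m200022)

lemma m211122: "map Suc [2,1,1,1,2,2] = [3,2,2,2,3,3]" by simp
lemma sh211122: "G [3,2,2,2,3,3] (Suc n) = G [2,1,1,1,2,2] n"
  using G_shift[of "[2,1,1,1,2,2]" n] by (simp only: m211122)

lemma m220002: "map Suc [2,2,0,0,0,2] = [3,3,1,1,1,3]" by simp
lemma sh220002: "G [3,3,1,1,1,3] (Suc n) = G [2,2,0,0,0,2] n"
  using G_shift[of "[2,2,0,0,0,2]" n] by (simp only: m220002)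

lemma m221112: "map Suc [2,2,1,1,1,2] = [3,3,2,2,2,3]" by simp
lemma sh221112: "G [3,3,2,2,2,3] (Suc n) = G [2,2,1,1,1,2] n"
  using G_shift[of "[2,2,1,1,1,2]" n] by (simp only: m221112)

lemma m222000: "map Suc [2,2,2,0,0,0] = [3,3,3,1,1,1]" by simp
lemma sh222000: "G [3,3,3,1,1,1] (Suc n) = G [2,2,2,0,0,0] n"
  using G_shift[of "[2,2,2,0,0,0]" n] by (simp only: m222000)

lemma m222111: "map Suc [2,2,2,1,1,1] = [3,3,3,2,2,2]" by simp
lemma sh222111: "G [3,3,3,2,2,2] (Suc n) = G [2,2,2,1,1,1] n"
  using G_shift[of "[2,2,2,1,1,1]" n] by (simp only: m222111)

lemma m222222: "map Suc [2,2,2,2,2,2] = [3,3,3,3,3,3]" by simp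
lemma sh222222: "G [3,3,3,3,3,3] (Suc n) = G [2,2,2,2,2,2] n"
  using G_shift[of "[2,2,2,2,2,2]" n] by (simp only: m222222)

lemma tr0: "G [0,0,0,0,0,0] (Suc (Suc (Suc k))) = G [0,0,0,0,0,0] (Suc (Suc k)) + G [0,0,0,2,2,2] (Suc (Suc k)) + G [2,0,0,0,2,2] (Suc (Suc k)) + G [2,2,0,0,0,2] (Suc (Suc k)) + G [2,2,2,0,0,0] (Suc (Suc k)) + G [2,2,2,2,2,2] (Suc (Suc k))"
proof -
  have "G [0,0,0,0,0,0] (Suc (Suc (Suc k))) = G [1,1,1,1,1,1] (Suc (Suc (Suc k))) + G [1,1,1,3,3,3] (Suc (Suc (Suc k))) + G [3,1,1,1,3,3] (Suc (Suc (Suc k))) + G [3,3,1,1,1,3] (Suc (Suc (Suc k))) + G [3,3,3,1,1,1] (Suc (Suc (Suc k))) + G [3,3,3,3,3,3] (Suc (Suc (Suc k)))"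
    by (simp add: G_unf0)
  then show ?thesis by (simp only: sh222222 sh222000 sh220002 sh200022 sh000222 sh000000)
qed

lemma tr1: "G [0,0,0,1,1,1] (Suc (Suc (Suc k))) = G [0,0,0,0,0,0] (Suc (Suc k)) + G [2,2,2,0,0,0] (Suc (Suc k))"
proof -
  have "G [0,0,0,1,1,1] (Suc (Suc (Suc k))) = G [1,1,1,1,1,1] (Suc (Suc (Suc k))) + G [3,3,3,1,1,1] (Suc (Suc (Suc k)))"
    by (simp add: G_unf0)
  then show ?thesis by (simp only: sh222000 sh000000)
qed

lemma tr2: "G [0,0,0,2,2,2] (Suc (Suc (Suc k))) = G [0,0,0,1,1,1] (Suc (Suc k)) + G [2,2,2,1,1,1] (Suc (Suc k))"
proof -
  have "G [0,0,0,2,2,2] (Suc (Suc (Suc k))) = G [1,1,1,2,2,2] (Suc (Suc (Suc k))) + G [3,3,3,2,2,2] (Suc (Suc (Suc k)))"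
    by (simp add: G_unf0)
  then show ?thesis by (simp only: sh222111 sh000111)
qed

lemma tr3: "G [0,0,1,1,1,0] (Suc (Suc (Suc k))) = G [2,2,0,0,0,2] (Suc (Suc k))"
proof -
  have "G [0,0,1,1,1,0] (Suc (Suc (Suc k))) = G [3,3,1,1,1,3] (Suc (Suc (Suc k)))"
    by (simp add: G_unf0)
  then show ?thesis by (simp only: sh220002)
qed

lemma tr4: "G [0,0,2,2,2,0] (Suc (Suc (Suc k))) = G [2,2,1,1,1,2] (Suc (Suc k))"
proof -
  have "G [0,0,2,2,2,0] (Suc (Suc (Suc k))) = G [3,3,2,2,2,3] (Suc (Suc (Suc k)))"
    by (simp add: G_unf0)
  then show ?thesis by (simp only: sh221112)
qed

lemma tr5: "G [0,1,1,1,0,0] (Suc (Suc (Suc k))) = G [2,0,0,0,2,2] (Suc (Suc k))"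
proof -
  have "G [0,1,1,1,0,0] (Suc (Suc (Suc k))) = G [3,1,1,1,3,3] (Suc (Suc (Suc k)))"
    by (simp add: G_unf0)
  then show ?thesis by (simp only: sh200022)
qed

lemma tr6: "G [0,2,2,2,0,0] (Suc (Suc (Suc k))) = G [2,1,1,1,2,2] (Suc (Suc k))"
proof -
  have "G [0,2,2,2,0,0] (Suc (Suc (Suc k))) = G [3,2,2,2,3,3] (Suc (Suc (Suc k)))"
    by (simp add: G_unf0)
  then show ?thesis by (simp only: sh211122)
qed

lemma tr7: "G [1,0,0,0,1,1] (Suc (Suc (Suc k))) = G [0,0,0,0,0,0] (Suc (Suc k)) + G [0,2,2,2,0,0] (Suc (Suc k))"
proof -
  have "G [1,0,0,0,1,1] (Suc (Suc (Suc k))) = G [1,1,1,1,1,1] (Suc (Suc (Suc k))) + G [1,3,3,3,1,1] (Suc (Suc (Suc k)))"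
    by (simp add: G_unf0)
  then show ?thesis by (simp only: sh022200 sh000000)
qed

lemma tr8: "G [1,1,0,0,0,1] (Suc (Suc (Suc k))) = G [0,0,0,0,0,0] (Suc (Suc k)) + G [0,0,2,2,2,0] (Suc (Suc k))"
proof -
  have "G [1,1,0,0,0,1] (Suc (Suc (Suc k))) = G [1,1,1,1,1,1] (Suc (Suc (Suc k))) + G [1,1,3,3,3,1] (Suc (Suc (Suc k)))"
    by (simp add: G_unf0)
  then show ?thesis by (simp only: sh002220 sh000000)
qed

lemma tr9: "G [1,1,1,0,0,0] (Suc (Suc (Suc k))) = G [0,0,0,0,0,0] (Suc (Suc k)) + G [0,0,0,2,2,2] (Suc (Suc k))"
proof -
  have "G [1,1,1,0,0,0] (Suc (Suc (Suc k))) = G [1,1,1,1,1,1] (Suc (Suc (Suc k))) + G [1,1,1,3,3,3] (Suc (Suc (Suc k)))"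
    by (simp add: G_unf0)
  then show ?thesis by (simp only: sh000222 sh000000)
qed

lemma tr10: "G [1,1,1,1,1,1] (Suc (Suc (Suc k))) = G [0,0,0,0,0,0] (Suc (Suc k))"
proof -
  have "G [1,1,1,1,1,1] (Suc (Suc (Suc k))) = G [1,1,1,1,1,1] (Suc (Suc (Suc k)))"
    by (simp add: G_unf0)
  then show ?thesis by (simp only: sh000000)
qed

lemma tr11: "G [1,1,1,2,2,2] (Suc (Suc (Suc k))) = G [0,0,0,1,1,1] (Suc (Suc k))"
proof -
  have "G [1,1,1,2,2,2] (Suc (Suc (Suc k))) = G [1,1,1,2,2,2] (Suc (Suc (Suc k)))"
    by (simp add: G_unf0)
  then show ?thesis by (simp only: sh000111)
qed

lemma tr12: "G [1,1,2,2,2,1] (Suc (Suc (Suc k))) = G [0,0,1,1,1,0] (Suc (Suc k))"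
proof -
  have "G [1,1,2,2,2,1] (Suc (Suc (Suc k))) = G [1,1,2,2,2,1] (Suc (Suc (Suc k)))"
    by (simp add: G_unf0)
  then show ?thesis by (simp only: sh001110)
qed

lemma tr13: "G [1,2,2,2,1,1] (Suc (Suc (Suc k))) = G [0,1,1,1,0,0] (Suc (Suc k))"
proof -
  have "G [1,2,2,2,1,1] (Suc (Suc (Suc k))) = G [1,2,2,2,1,1] (Suc (Suc (Suc k)))"
    by (simp add: G_unf0)
  then show ?thesis by (simp only: sh011100)
qed

lemma tr14: "G [2,0,0,0,2,2] (Suc (Suc (Suc k))) = G [1,0,0,0,1,1] (Suc (Suc k)) + G [1,2,2,2,1,1] (Suc (Suc k))"
proof -
  have "G [2,0,0,0,2,2] (Suc (Suc (Suc k))) = G [2,1,1,1,2,2] (Suc (Suc (Suc k))) + G [2,3,3,3,2,2] (Suc (Suc (Suc k)))"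
    by (simp add: G_unf0)
  then show ?thesis by (simp only: sh122211 sh100011)
qed

lemma tr15: "G [2,1,1,1,2,2] (Suc (Suc (Suc k))) = G [1,0,0,0,1,1] (Suc (Suc k))"
proof -
  have "G [2,1,1,1,2,2] (Suc (Suc (Suc k))) = G [2,1,1,1,2,2] (Suc (Suc (Suc k)))"
    by (simp add: G_unf0)
  then show ?thesis by (simp only: sh100011)
qed

lemma tr16: "G [2,2,0,0,0,2] (Suc (Suc (Suc k))) = G [1,1,0,0,0,1] (Suc (Suc k)) + G [1,1,2,2,2,1] (Suc (Suc k))"
proof -
  have "G [2,2,0,0,0,2] (Suc (Suc (Suc k))) = G [2,2,1,1,1,2] (Suc (Suc (Suc k))) + G [2,2,3,3,3,2] (Suc (Suc (Suc k)))"
    by (simp add: G_unf0)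
  then show ?thesis by (simp only: sh112221 sh110001)
qed

lemma tr17: "G [2,2,1,1,1,2] (Suc (Suc (Suc k))) = G [1,1,0,0,0,1] (Suc (Suc k))"
proof -
  have "G [2,2,1,1,1,2] (Suc (Suc (Suc k))) = G [2,2,1,1,1,2] (Suc (Suc (Suc k)))"
    by (simp add: G_unf0)
  then show ?thesis by (simp only: sh110001)
qed

lemma tr18: "G [2,2,2,0,0,0] (Suc (Suc (Suc k))) = G [1,1,1,0,0,0] (Suc (Suc k)) + G [1,1,1,2,2,2] (Suc (Suc k))"
proof -
  have "G [2,2,2,0,0,0] (Suc (Suc (Suc k))) = G [2,2,2,1,1,1] (Suc (Suc (Suc k))) + G [2,2,2,3,3,3] (Suc (Suc (Suc k)))"
    by (simp add: G_unf0)
  then show ?thesis by (simp only: sh111222 sh111000)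
qed

lemma tr19: "G [2,2,2,1,1,1] (Suc (Suc (Suc k))) = G [1,1,1,0,0,0] (Suc (Suc k))"
proof -
  have "G [2,2,2,1,1,1] (Suc (Suc (Suc k))) = G [2,2,2,1,1,1] (Suc (Suc (Suc k)))"
    by (simp add: G_unf0)
  then show ?thesis by (simp only: sh111000)
qed

lemma tr20: "G [2,2,2,2,2,2] (Suc (Suc (Suc k))) = G [1,1,1,1,1,1] (Suc (Suc k))"
proof -
  have "G [2,2,2,2,2,2] (Suc (Suc (Suc k))) = G [2,2,2,2,2,2] (Suc (Suc (Suc k)))"
    by (simp add: G_unf0)
  then show ?thesis by (simp only: sh111111)
qed

definition st :: "nat list list" where "st = [[0,0,0,0,0,0], [0,0,0,1,1,1], [0,0,0,2,2,2], [0,0,1,1,1,0], [0,0,2,2,2,0], [0,1,1,1,0,0], [0,2,2,2,0,0], [1,0,0,0,1,1], [1,1,0,0,0,1], [1,1,1,0,0,0], [1,1,1,1,1,1], [1,1,1,2,2,2], [1,1,2,2,2,1], [1,2,2,2,1,1], [2,0,0,0,2,2], [2,1,1,1,2,2], [2,2,0,0,0,2], [2,2,1,1,1,2], [2,2,2,0,0,0], [2,2,2,1,1,1], [2,2,2,2,2,2]]"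

definition g :: "nat \<Rightarrow> nat \<Rightarrow> int" where "g i n = int (G (st ! i) n)"

definition Tm :: "int list list" where "Tm = [[1, 0, 1, 0, 0, 0, 0, 0, 0, 0, 0, 0, 0, 0, 1, 0, 1, 0, 1, 0, 1], [1, 0, 0, 0, 0, 0, 0, 0, 0, 0, 0, 0, 0, 0, 0, 0, 0, 0, 1, 0, 0], [0, 1, 0, 0, 0, 0, 0, 0, 0, 0, 0, 0, 0, 0, 0, 0, 0, 0, 0, 1, 0], [0, 0, 0, 0, 0, 0, 0, 0, 0, 0, 0, 0, 0, 0, 0, 0, 1, 0, 0, 0, 0], [0, 0, 0, 0, 0, 0, 0, 0, 0, 0, 0, 0, 0, 0, 0, 0, 0, 1, 0, 0, 0], [0, 0, 0, 0, 0, 0, 0, 0, 0, 0, 0, 0, 0, 0, 1, 0, 0, 0, 0, 0, 0], [0, 0, 0, 0, 0, 0, 0, 0, 0, 0, 0, 0, 0, 0, 0, 1, 0, 0, 0, 0, 0], [1, 0, 0, 0, 0, 0, 1, 0, 0, 0, 0, 0, 0, 0, 0, 0, 0, 0, 0, 0, 0], [1, 0, 0, 0, 1, 0, 0, 0, 0, 0, 0, 0, 0, 0, 0, 0, 0, 0, 0, 0, 0], [1, 0, 1, 0, 0, 0, 0, 0, 0, 0, 0, 0, 0, 0, 0, 0, 0, 0, 0, 0, 0], [1, 0, 0, 0, 0, 0, 0, 0, 0, 0, 0, 0, 0, 0, 0, 0, 0, 0, 0, 0, 0], [0, 1, 0, 0, 0, 0, 0, 0, 0, 0, 0, 0, 0,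 0, 0, 0, 0, 0, 0, 0, 0], [0, 0, 0, 1, 0, 0, 0, 0, 0, 0, 0, 0, 0, 0, 0, 0, 0, 0, 0, 0, 0], [0, 0, 0, 0, 0, 1, 0, 0, 0, 0, 0, 0, 0, 0, 0, 0, 0, 0, 0, 0, 0], [0, 0, 0, 0, 0, 0, 0, 1, 0, 0, 0, 0, 0, 1, 0, 0, 0, 0, 0, 0, 0], [0, 0, 0, 0, 0, 0, 0, 1, 0, 0, 0, 0, 0, 0, 0, 0, 0, 0, 0, 0, 0], [0, 0, 0, 0, 0, 0, 0, 0, 1, 0, 0, 0, 1, 0, 0, 0, 0, 0, 0, 0, 0], [0, 0, 0, 0, 0, 0, 0, 0, 1, 0, 0, 0, 0, 0, 0, 0, 0, 0, 0, 0, 0], [0, 0, 0, 0, 0, 0, 0, 0, 0, 1, 0, 1, 0, 0, 0, 0, 0, 0, 0, 0, 0], [0, 0, 0, 0, 0, 0, 0, 0, 0, 1, 0, 0, 0, 0, 0, 0, 0, 0, 0, 0, 0], [0, 0, 0, 0, 0, 0, 0, 0, 0, 0, 1, 0, 0, 0, 0, 0, 0, 0, 0, 0, 0]]"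

definition T :: "nat \<Rightarrow> nat \<Rightarrow> int" where "T i j = Tm ! i ! j"

definition Um :: "int list list" where "Um = [[1, 0, 0, 0, 0, 0, 0, 0, 0, 0, 0, 0, 0, 0, 0, 0, 0, 0, 0, 0, 0], [1, 0, 1, 0, 0, 0, 0, 0, 0, 0, 0, 0, 0, 0, 1, 0, 1, 0, 1, 0, 1], [1, 1, 1, 0, 0, 0, 0, 1, 1, 1, 1, 1, 1, 1, 1, 0, 1, 0, 1, 1, 1], [6, 2, 2, 1, 1, 1, 1, 1, 1, 2, 1, 1, 1, 1, 1, 0, 1, 0, 2, 1, 1], [13, 3, 8, 1, 1, 1, 1, 1, 1, 3, 1, 2, 1, 1, 7, 1, 7, 1, 8, 2, 6], [22, 10, 16, 1, 1, 1, 1, 8, 8, 10, 6, 8, 7, 7, 14, 1, 14, 1, 16, 8, 13], [64, 24, 32, 7, 8, 7, 8, 15, 15, 24, 13, 16, 14, 14, 23, 1, 23, 1, 32, 16, 22], [155, 48, 88, 14, 15, 14, 15, 24, 24, 48, 22, 32, 23, 23, 71, 8, 71, 8, 88, 32, 64], [321, 120, 203, 23, 24, 23, 24, 79, 79, 120, 64, 88, 71, 71, 169, 15, 169, 15, 203, 88, 155], [783, 291, 441, 71, 79, 71, 79, 184, 184, 291, 155, 203, 169, 169, 344, 24, 344, 24, 441, 203, 321], [1888, 644, 1074, 169, 184, 169, 184, 368, 368, 644, 321, 441, 344, 344, 854, 79, 854, 79, 1074, 441, 783], [4233, 1515, 2532, 344, 368, 344, 368, 933, 933, 1515, 783, 1074,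 854, 854, 2057, 184, 2057, 184, 2532, 1074, 1888], [9912, 3606, 5748, 854, 933, 854, 933, 2241, 2241, 3606, 1888, 2532, 2057, 2057, 4577, 368, 4577, 368, 5748, 2532, 4233]]"

definition U :: "nat \<Rightarrow> nat \<Rightarrow> int" where "U i j = Um ! i ! j"

definition qc :: "nat \<Rightarrow> int" where "qc d = [1, -1, -1, -7, 1, 5, 10, 1, -3, -5, -1, 1, 1] ! d"

lemma sum21: "(\<Sum>j<(21::nat). f j) = f 0 + f 1 + f 2 + f 3 + f 4 + f 5 + f 6 + f 7 + f 8 + f 9 + f 10 + f 11 + f 12 + f 13 + f 14 + f 15 + f 16 + f 17 + f 18 + f 19 + f 20"
  by (simp add: eval_nat_numeral)

lemma sum13: "(\<Sum>j\<le>(12::nat). f j) = f 0 + f 1 + f 2 + f 3 + f 4 + f 5 + f 6 + f 7 + f 8 + f 9 + f 10 + f 11 + f 12"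
  by (simp add: eval_nat_numeral)

lemma all12: "(\<forall>j<(12::nat). P j) = (P 0 \<and> P 1 \<and> P 2 \<and> P 3 \<and> P 4 \<and> P 5 \<and> P 6 \<and> P 7 \<and> P 8 \<and> P 9 \<and> P 10 \<and> P 11)"
  by (simp add: eval_nat_numeral less_Suc_eq all_conj_distrib)

lemma all21: "(\<forall>j<(21::nat). P j) = (P 0 \<and> P 1 \<and> P 2 \<and> P 3 \<and> P 4 \<and> P 5 \<and> P 6 \<and> P 7 \<and> P 8 \<and> P 9 \<and> P 10 \<and> P 11 \<and> P 12 \<and> P 13 \<and> P 14 \<and> P 15 \<and> P 16 \<and> P 17 \<and> P 18 \<and> P 19 \<and> P 20)"
  by (simp add: eval_nat_numeral less_Suc_eq all_conj_distrib)
lemma trans_g0: "\<forall>i<21. g i (Suc (Suc (Suc k))) = (\<Sum>j<21. T i j * g j (Suc (Suc k)))"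
  unfolding all21 by (simp add: g_def st_def T_def Tm_def sum21 tr0[simplified] tr1[simplified] tr2[simplified] tr3[simplified] tr4[simplified] tr5[simplified] tr6[simplified] tr7[simplified] tr8[simplified] tr9[simplified] tr10[simplified] tr11[simplified] tr12[simplified] tr13[simplified] tr14[simplified] tr15[simplified] tr16[simplified] tr17[simplified] tr18[simplified] tr19[simplified] tr20[simplified])
lemma trans_g: "i < 21 \<Longrightarrow> g i (Suc (Suc (Suc k))) = (\<Sum>j<21. T i j * g j (Suc (Suc k)))"
  using trans_g0 by blast

lemma check1_0: "\<forall>i<12. \<forall>l<21. U (Suc i) l = (\<Sum>j<21. U i j * T j l)"
  unfolding all21 all12 by (simp add: sum21 U_def Um_def T_def Tm_def)
lemma check1: "i < 12 \<Longrightarrow> l < 21 \<Longrightarrow> U (Suc i) l = (\<Sum>j<21. U i j * T j l)"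
  using check1_0 by blast

lemma check2_0: "\<forall>l<21. (\<Sum>d\<le>12. qc d * U (12 - d) l) = 0"
  unfolding all21 by (simp add: sum13 qc_def U_def Um_def)
lemma check2: "l < 21 \<Longrightarrow> (\<Sum>d\<le>12. qc d * U (12 - d) l) = 0"
  using check2_0 by blast

lemma Ug: "i \<le> 12 \<Longrightarrow> g 0 (i + (Suc (Suc k))) = (\<Sum>l<21. U i l * g l (Suc (Suc k)))"
proof (induction i arbitrary: k)
  case 0
  show ?case by (simp add: sum21 U_def Um_def)
next
  case (Suc i)
  have i: "i \<le> 12" "i < 12" using Suc.prems by auto
  have tg: "g j (Suc (Suc (Suc k))) = (\<Sum>l<21. T j l * g l (Suc (Suc k)))" if "j < 21" for j
    using trans_g[OF that, of k] by blast
  have "g 0 (Suc i + (Suc (Suc k))) = g 0 (i + (Suc (Suc (Suc k))))" by simp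
  also have "\<dots> = (\<Sum>j<21. U i j * g j (Suc (Suc (Suc k))))" using Suc.IH[OF i(1)] by blast
  also have "\<dots> = (\<Sum>j<21. U i j * (\<Sum>l<21. T j l * g l (Suc (Suc k))))"
    by (rule sum.cong) (auto simp: tg)
  also have "\<dots> = (\<Sum>j<21. \<Sum>l<21. U i j * T j l * g l (Suc (Suc k)))"
    by (simp add: sum_distrib_left mult.assoc)
  also have "\<dots> = (\<Sum>l<21. \<Sum>j<21. U i j * T j l * g l (Suc (Suc k)))"
    by (rule sum.swap)
  also have "\<dots> = (\<Sum>l<21. (\<Sum>j<21. U i j * T j l) * g l (Suc (Suc k)))"
    by (simp add: sum_distrib_right)
  also have "\<dots> = (\<Sum>l<21. U (Suc i) l * g l (Suc (Suc k)))"
    by (rule sum.cong) (auto simp: check1[OF i(2)])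
  finally show ?case .
qed

lemma Rec: "(\<Sum>d\<le>12. qc d * g 0 ((12 - d) + (Suc (Suc k)))) = 0"
proof -
  have "(\<Sum>d\<le>12. qc d * g 0 ((12 - d) + (Suc (Suc k)))) = (\<Sum>d\<le>12. qc d * (\<Sum>l<21. U (12 - d) l * g l (Suc (Suc k))))"
    by (rule sum.cong[OF refl]) (metis Ug atMost_iff diff_le_self)
  also have "\<dots> = (\<Sum>d\<le>12. \<Sum>l<21. qc d * U (12 - d) l * g l (Suc (Suc k)))"
    by (simp add: sum_distrib_left mult.assoc)
  also have "\<dots> = (\<Sum>l<21. \<Sum>d\<le>12. qc d * U (12 - d) l * g l (Suc (Suc k)))"
    by (rule sum.swap)
  also have "\<dots> = (\<Sum>l<21. (\<Sum>d\<le>12. qc d * U (12 - d) l) * g l (Suc (Suc k)))"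
    by (simp add: sum_distrib_right)
  also have "\<dots> = 0"
    by (rule sum.neutral) (auto simp: check2)
  finally show ?thesis .
qed


lemma gv0: "g 0 (Suc (Suc 0)) = 1" by (simp add: g_def st_def G.simps)

lemma gv1: "g 1 (Suc (Suc 0)) = 1" by (simp add: g_def st_def G.simps)

lemma gv2: "g 2 (Suc (Suc 0)) = 1" by (simp add: g_def st_def G.simps)

lemma gv3: "g 3 (Suc (Suc 0)) = 0" by (simp add: g_def st_def G.simps)

lemma gv4: "g 4 (Suc (Suc 0)) = 0" by (simp add: g_def st_def G.simps)

lemma gv5: "g 5 (Suc (Suc 0)) = 0" by (simp add: g_def st_def G.simps)

lemma gv6: "g 6 (Suc (Suc 0)) = 0" by (simp add: g_def st_def G.simps)

lemma gv7: "g 7 (Suc (Suc 0)) = 1" by (simp add: g_def st_def G.simps)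

lemma gv8: "g 8 (Suc (Suc 0)) = 1" by (simp add: g_def st_def G.simps)

lemma gv9: "g 9 (Suc (Suc 0)) = 1" by (simp add: g_def st_def G.simps)

lemma gv10: "g 10 (Suc (Suc 0)) = 1" by (simp add: g_def st_def G.simps)

lemma gv11: "g 11 (Suc (Suc 0)) = 1" by (simp add: g_def st_def G.simps)

lemma gv12: "g 12 (Suc (Suc 0)) = 0" by (simp add: g_def st_def G.simps)

lemma gv13: "g 13 (Suc (Suc 0)) = 0" by (simp add: g_def st_def G.simps)

lemma gv14: "g 14 (Suc (Suc 0)) = 1" by (simp add: g_def st_def G.simps)

lemma gv15: "g 15 (Suc (Suc 0)) = 1" by (simp add: g_def st_def G.simps)

lemma gv16: "g 16 (Suc (Suc 0)) = 1" by (simp add: g_def st_def G.simps)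

lemma gv17: "g 17 (Suc (Suc 0)) = 1" by (simp add: g_def st_def G.simps)

lemma gv18: "g 18 (Suc (Suc 0)) = 1" by (simp add: g_def st_def G.simps)

lemma gv19: "g 19 (Suc (Suc 0)) = 1" by (simp add: g_def st_def G.simps)

lemma gv20: "g 20 (Suc (Suc 0)) = 1" by (simp add: g_def st_def G.simps)

lemma gv1': "g (Suc 0) (Suc (Suc 0)) = 1" using gv1 by simp

lemma av2: "g 0 2 = 1"
proof -
  have "g 0 (0 + Suc (Suc 0)) = 1" using Ug[of 0 0] by (simp add: sum21 U_def Um_def gv0 gv1 gv2 gv3 gv4 gv5 gv6 gv7 gv8 gv9 gv10 gv11 gv12 gv13 gv14 gv15 gv16 gv17 gv18 gv19 gv20 gv1')
  then show ?thesis by (simp add: eval_nat_numeral)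
qed

lemma av3: "g 0 3 = 6"
proof -
  have "g 0 (1 + Suc (Suc 0)) = 6" using Ug[of 1 0] by (simp add: sum21 U_def Um_def gv0 gv1 gv2 gv3 gv4 gv5 gv6 gv7 gv8 gv9 gv10 gv11 gv12 gv13 gv14 gv15 gv16 gv17 gv18 gv19 gv20 gv1')
  then show ?thesis by (simp add: eval_nat_numeral)
qed

lemma av4: "g 0 4 = 13"
proof -
  have "g 0 (2 + Suc (Suc 0)) = 13" using Ug[of 2 0] by (simp add: sum21 U_def Um_def gv0 gv1 gv2 gv3 gv4 gv5 gv6 gv7 gv8 gv9 gv10 gv11 gv12 gv13 gv14 gv15 gv16 gv17 gv18 gv19 gv20 gv1')
  then show ?thesis by (simp add: eval_nat_numeral)
qed

lemma av5: "g 0 5 = 22"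
proof -
  have "g 0 (3 + Suc (Suc 0)) = 22" using Ug[of 3 0] by (simp add: sum21 U_def Um_def gv0 gv1 gv2 gv3 gv4 gv5 gv6 gv7 gv8 gv9 gv10 gv11 gv12 gv13 gv14 gv15 gv16 gv17 gv18 gv19 gv20 gv1')
  then show ?thesis by (simp add: eval_nat_numeral)
qed

lemma av6: "g 0 6 = 64"
proof -
  have "g 0 (4 + Suc (Suc 0)) = 64" using Ug[of 4 0] by (simp add: sum21 U_def Um_def gv0 gv1 gv2 gv3 gv4 gv5 gv6 gv7 gv8 gv9 gv10 gv11 gv12 gv13 gv14 gv15 gv16 gv17 gv18 gv19 gv20 gv1')
  then show ?thesis by (simp add: eval_nat_numeral)
qed

lemma av7: "g 0 7 = 155"
proof -
  have "g 0 (5 + Suc (Suc 0)) = 155" using Ug[of 5 0] by (simp add: sum21 U_def Um_def gv0 gv1 gv2 gv3 gv4 gv5 gv6 gv7 gv8 gv9 gv10 gv11 gv12 gv13 gv14 gv15 gv16 gv17 gv18 gv19 gv20 gv1')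
  then show ?thesis by (simp add: eval_nat_numeral)
qed

lemma av8: "g 0 8 = 321"
proof -
  have "g 0 (6 + Suc (Suc 0)) = 321" using Ug[of 6 0] by (simp add: sum21 U_def Um_def gv0 gv1 gv2 gv3 gv4 gv5 gv6 gv7 gv8 gv9 gv10 gv11 gv12 gv13 gv14 gv15 gv16 gv17 gv18 gv19 gv20 gv1')
  then show ?thesis by (simp add: eval_nat_numeral)
qed

lemma av9: "g 0 9 = 783"
proof -
  have "g 0 (7 + Suc (Suc 0)) = 783" using Ug[of 7 0] by (simp add: sum21 U_def Um_def gv0 gv1 gv2 gv3 gv4 gv5 gv6 gv7 gv8 gv9 gv10 gv11 gv12 gv13 gv14 gv15 gv16 gv17 gv18 gv19 gv20 gv1')
  then show ?thesis by (simp add: eval_nat_numeral)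
qed

lemma av10: "g 0 10 = 1888"
proof -
  have "g 0 (8 + Suc (Suc 0)) = 1888" using Ug[of 8 0] by (simp add: sum21 U_def Um_def gv0 gv1 gv2 gv3 gv4 gv5 gv6 gv7 gv8 gv9 gv10 gv11 gv12 gv13 gv14 gv15 gv16 gv17 gv18 gv19 gv20 gv1')
  then show ?thesis by (simp add: eval_nat_numeral)
qed

lemma av11: "g 0 11 = 4233"
proof -
  have "g 0 (9 + Suc (Suc 0)) = 4233" using Ug[of 9 0] by (simp add: sum21 U_def Um_def gv0 gv1 gv2 gv3 gv4 gv5 gv6 gv7 gv8 gv9 gv10 gv11 gv12 gv13 gv14 gv15 gv16 gv17 gv18 gv19 gv20 gv1')
  then show ?thesis by (simp add: eval_nat_numeral)
qed

lemma av12: "g 0 12 = 9912"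
proof -
  have "g 0 (10 + Suc (Suc 0)) = 9912" using Ug[of 10 0] by (simp add: sum21 U_def Um_def gv0 gv1 gv2 gv3 gv4 gv5 gv6 gv7 gv8 gv9 gv10 gv11 gv12 gv13 gv14 gv15 gv16 gv17 gv18 gv19 gv20 gv1')
  then show ?thesis by (simp add: eval_nat_numeral)
qed

lemma av13: "g 0 13 = 23494"
proof -
  have "g 0 (11 + Suc (Suc 0)) = 23494" using Ug[of 11 0] by (simp add: sum21 U_def Um_def gv0 gv1 gv2 gv3 gv4 gv5 gv6 gv7 gv8 gv9 gv10 gv11 gv12 gv13 gv14 gv15 gv16 gv17 gv18 gv19 gv20 gv1')
  then show ?thesis by (simp add: eval_nat_numeral)
qed

lemma av0: "g 0 0 = 1" by (simp add: g_def st_def G.simps)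

lemma av1: "g 0 1 = 1" by (simp add: g_def st_def G.simps)

definition Pp :: "rat poly" where "Pp = ((1 - monom 1 6)^2 * (1 - monom 1 4 - monom 1 6))"

definition Qp :: "rat poly" where "Qp = (1 - monom 1 2 - monom 1 4 - 7 * monom 1 6 + monom 1 8 + 5 * monom 1 10 + 10 * monom 1 12 + monom 1 14 - 3 * monom 1 16 - 5 * monom 1 18 - monom 1 20 + monom 1 22 + monom 1 24)"

definition pz :: "nat \<Rightarrow> rat" where "pz i = (if i < 19 then [1, 0, 0, 0, -1, 0, -3, 0, 0, 0, 2, 0, 3, 0, 0, 0, -1, 0, -1] ! i else 0)"

definition qz :: "nat \<Rightarrow> rat" where "qz i = (if i < 25 then [1, 0, -1, 0, -1, 0, -7, 0, 1, 0, 5, 0, 10, 0, 1, 0, -3, 0, -5, 0, -1, 0, 1, 0, 1] ! i else 0)"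

lemma all19: "(\<forall>j<(19::nat). P j) = (P 0 \<and> P 1 \<and> P 2 \<and> P 3 \<and> P 4 \<and> P 5 \<and> P 6 \<and> P 7 \<and> P 8 \<and> P 9 \<and> P 10 \<and> P 11 \<and> P 12 \<and> P 13 \<and> P 14 \<and> P 15 \<and> P 16 \<and> P 17 \<and> P 18)"
  by (simp add: eval_nat_numeral less_Suc_eq all_conj_distrib)

lemma all25: "(\<forall>j<(25::nat). P j) = (P 0 \<and> P 1 \<and> P 2 \<and> P 3 \<and> P 4 \<and> P 5 \<and> P 6 \<and> P 7 \<and> P 8 \<and> P 9 \<and> P 10 \<and> P 11 \<and> P 12 \<and> P 13 \<and> P 14 \<and> P 15 \<and> P 16 \<and> P 17 \<and> P 18 \<and> P 19 \<and> P 20 \<and> P 21 \<and> P 22 \<and> P 23 \<and> P 24)"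
  by (simp add: eval_nat_numeral less_Suc_eq all_conj_distrib)

lemma all28: "(\<forall>j<(28::nat). P j) = (P 0 \<and> P 1 \<and> P 2 \<and> P 3 \<and> P 4 \<and> P 5 \<and> P 6 \<and> P 7 \<and> P 8 \<and> P 9 \<and> P 10 \<and> P 11 \<and> P 12 \<and> P 13 \<and> P 14 \<and> P 15 \<and> P 16 \<and> P 17 \<and> P 18 \<and> P 19 \<and> P 20 \<and> P 21 \<and> P 22 \<and> P 23 \<and> P 24 \<and> P 25 \<and> P 26 \<and> P 27)"
  by (simp add: eval_nat_numeral less_Suc_eq all_conj_distrib)

lemma sum25: "(\<Sum>j=0..(24::nat). f j) = f 0 + f 1 + f 2 + f 3 + f 4 + f 5 + f 6 + f 7 + f 8 + f 9 + f 10 + f 11 + f 12 + f 13 + f 14 + f 15 + f 16 + f 17 + f 18 + f 19 + f 20 + f 21 + f 22 + f 23 + f 24"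
  by (simp add: eval_nat_numeral atLeast0AtMost)

lemma coeff_numm: "coeff (numeral k * p) i = numeral k * coeff (p :: rat poly) i"
  by (simp add: numeral_poly)

lemma Pp_alt: "Pp = 1 - monom 1 4 - 3 * monom 1 6 + 2 * monom 1 10 + 3 * monom 1 12 - monom 1 16 - monom 1 18"
  unfolding Pp_def by (simp add: power2_eq_square algebra_simps mult_monom)

lemma coeffP: "coeff Pp i = pz i"
proof (cases "i < 19")
  case True
  have "\<forall>i<19. coeff Pp i = pz i" unfolding all19 by (simp add: Pp_alt pz_def coeff_numm coeff_1)
  then show ?thesis using True by blast
next
  case False
  then show ?thesis by (simp add: Pp_alt pz_def coeff_numm coeff_1)
qed

lemma coeffQ: "coeff Qp i = qz i"
proof (cases "i < 25")
  case True
  have "\<forall>i<25. coeff Qp i = qz i" unfolding all25 by (simp add: Qp_def qz_def coeff_numm coeff_1)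
  then show ?thesis using True by blast
next
  case False
  then show ?thesis by (simp add: Qp_def qz_def coeff_numm coeff_1)
qed

lemma Acoef: "(of_nat (T_count 1 3 6 m) :: rat) = (if even m then of_int (g 0 (m div 2)) else 0)"
  by (simp add: T_count_G[simplified] g_def st_def)

lemma div2: "(2 * k + numeral n) div 2 = k + numeral n div (2::nat)"
  by simp

lemma conv: "(\<Sum>i=0..N. qz i * B (N - i)) = (\<Sum>i=0..24. qz i * (if i \<le> N then B (N - i) else (0::rat)))"
proof -
  have "(\<Sum>i=0..N. qz i * B (N - i)) = (\<Sum>i=0..N. qz i * (if i \<le> N then B (N - i) else 0))"
    by (rule sum.cong) auto
  also have "\<dots> = (\<Sum>i=0..N+24. qz i * (if i \<le> N then B (N - i) else 0))"
    by (rule sum.mono_neutral_left) auto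
  also have "\<dots> = (\<Sum>i=0..24. qz i * (if i \<le> N then B (N - i) else 0))"
    by (rule sum.mono_neutral_right) (auto simp: qz_def)
  finally show ?thesis .
qed


lemma idx0: "12 - 0 + Suc (Suc k) = k + 14" by simp

lemma qcv0: "qc 0 = 1" by (simp add: qc_def)

lemma idx1: "12 - 1 + Suc (Suc k) = k + 13" by simp

lemma qcv1: "qc 1 = -1" by (simp add: qc_def)

lemma idx2: "12 - 2 + Suc (Suc k) = k + 12" by simp

lemma qcv2: "qc 2 = -1" by (simp add: qc_def)

lemma idx3: "12 - 3 + Suc (Suc k) = k + 11" by simp

lemma qcv3: "qc 3 = -7" by (simp add: qc_def)

lemma idx4: "12 - 4 + Suc (Suc k) = k + 10" by simp

lemma qcv4: "qc 4 = 1" by (simp add: qc_def)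

lemma idx5: "12 - 5 + Suc (Suc k) = k + 9" by simp

lemma qcv5: "qc 5 = 5" by (simp add: qc_def)

lemma idx6: "12 - 6 + Suc (Suc k) = k + 8" by simp

lemma qcv6: "qc 6 = 10" by (simp add: qc_def)

lemma idx7: "12 - 7 + Suc (Suc k) = k + 7" by simp

lemma qcv7: "qc 7 = 1" by (simp add: qc_def)

lemma idx8: "12 - 8 + Suc (Suc k) = k + 6" by simp

lemma qcv8: "qc 8 = -3" by (simp add: qc_def)

lemma idx9: "12 - 9 + Suc (Suc k) = k + 5" by simp

lemma qcv9: "qc 9 = -5" by (simp add: qc_def)

lemma idx10: "12 - 10 + Suc (Suc k) = k + 4" by simp

lemma qcv10: "qc 10 = -1" by (simp add: qc_def)

lemma idx11: "12 - 11 + Suc (Suc k) = k + 3" by simp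

lemma qcv11: "qc 11 = 1" by (simp add: qc_def)

lemma idx12: "12 - 12 + Suc (Suc k) = k + 2" by simp

lemma qcv12: "qc 12 = 1" by (simp add: qc_def)

lemma Rec2: "(1) * g 0 (k + 14) + (-1) * g 0 (k + 13) + (-1) * g 0 (k + 12) + (-7) * g 0 (k + 11) + (1) * g 0 (k + 10) + (5) * g 0 (k + 9) + (10) * g 0 (k + 8) + (1) * g 0 (k + 7) + (-3) * g 0 (k + 6) + (-5) * g 0 (k + 5) + (-1) * g 0 (k + 4) + (1) * g 0 (k + 3) + (1) * g 0 (k + 2) = 0"
proof -
  have "(\<Sum>d\<le>12. qc d * g 0 ((12 - d) + Suc (Suc k))) = 0" by (rule Rec)
  then have "qc 0 * g 0 (12 - 0 + Suc (Suc k)) + qc 1 * g 0 (12 - 1 + Suc (Suc k)) + qc 2 * g 0 (12 - 2 + Suc (Suc k)) + qc 3 * g 0 (12 - 3 + Suc (Suc k)) + qc 4 * g 0 (12 - 4 + Suc (Suc k)) + qc 5 * g 0 (12 - 5 + Suc (Suc k)) + qc 6 * g 0 (12 - 6 + Suc (Suc k)) + qc 7 * g 0 (12 - 7 + Suc (Suc k)) + qc 8 * g 0 (12 - 8 + Suc (Suc k)) + qc 9 * g 0 (12 - 9 + Suc (Suc k)) + qc 10 * g 0 (12 - 10 + Suc (Suc k)) + qc 11 * g 0 (12 - 11 + Suc (Suc k)) + qc 12 * g 0 (12 - 12 + Suc (Suc k)) = 0" by (simp only: sum13)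
  then show ?thesis by (simp only: idx0 idx1 idx2 idx3 idx4 idx5 idx6 idx7 idx8 idx9 idx10 idx11 idx12 qcv0 qcv1 qcv2 qcv3 qcv4 qcv5 qcv6 qcv7 qcv8 qcv9 qcv10 qcv11 qcv12)
qed

lemma small: "\<forall>N<28. (\<Sum>i=0..24. qz i * (if i \<le> N then of_nat (T_count 1 3 6 (N - i)) else (0::rat))) = pz N"
  unfolding all28 sum25 by (simp add: qz_def pz_def Acoef[simplified] av0 av1 av2 av3 av4 av5 av6 av7 av8 av9 av10 av11 av12 av13 av1[simplified])

lemma big_even: "(\<Sum>i=0..24. qz i * (if i \<le> 2*k+28 then of_nat (T_count 1 3 6 (2*k+28 - i)) else (0::rat))) = pz (2*k+28)"
proof -
  have R: "(of_int ((1) * g 0 (k + 14) + (-1) * g 0 (k + 13) + (-1) * g 0 (k + 12) + (-7) * g 0 (k + 11) + (1) * g 0 (k + 10) + (5) * g 0 (k + 9) + (10) * g 0 (k + 8) + (1) * g 0 (k + 7) + (-3) * g 0 (k + 6) + (-5) * g 0 (k + 5) + (-1) * g 0 (k + 4) + (1) * g 0 (k + 3) + (1) * g 0 (k + 2)) :: rat) = 0" using Rec2[of k] by simp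
  show ?thesis unfolding sum25 using R by (simp add: qz_def pz_def Acoef[simplified] div2 add.commute[of _ k])
qed

lemma big_odd: "(\<Sum>i=0..24. qz i * (if i \<le> 2*k+29 then of_nat (T_count 1 3 6 (2*k+29 - i)) else (0::rat))) = pz (2*k+29)"
  unfolding sum25 by (simp add: qz_def pz_def Acoef[simplified])

theorem mainTheorem3:
  shows "Abs_fps (\<lambda>N. of_nat (T_count 1 3 6 N) :: rat) =
    fps_of_poly ((1 - monom 1 6)^2 * (1 - monom 1 4 - monom 1 6)) /
    fps_of_poly (1 - monom 1 2 - monom 1 4 - 7 * monom 1 6 + monom 1 8 + 5 * monom 1 10
       + 10 * monom 1 12 + monom 1 14 - 3 * monom 1 16 - 5 * monom 1 18 - monom 1 20
       + monom 1 22 + monom 1 24)"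
proof -
  let ?A = "Abs_fps (\<lambda>N. of_nat (T_count 1 3 6 N) :: rat)"
  have coefN: "(?A * fps_of_poly Qp) $ N = coeff Pp N" for N
  proof -
    have "(?A * fps_of_poly Qp) $ N = (fps_of_poly Qp * ?A) $ N" by (simp only: mult.commute)
    also have "\<dots> = (\<Sum>i=0..N. qz i * of_nat (T_count 1 3 6 (N - i)))"
      by (simp only: fps_mult_nth fps_of_poly_nth coeffQ fps_nth_Abs_fps)
    also have "\<dots> = (\<Sum>i=0..24. qz i * (if i \<le> N then of_nat (T_count 1 3 6 (N - i)) else 0))"
      by (rule conv[where B = "\<lambda>m. of_nat (T_count 1 3 6 m)"])
    also have "\<dots> = pz N"
    proof (cases "N < 28")
      case True
      then show ?thesis using small by blast
    next
      case False
      then obtain M where M: "N = M + 28" by (metis add.commute le_iff_add not_less)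
      obtain k where "M = 2 * k \<or> M = 2 * k + 1" by (metis dvd_def odd_two_times_div_two_succ)
      then have "N = 2 * k + 28 \<or> N = 2 * k + 29" using M by auto
      then show ?thesis using big_even[of k] big_odd[of k] by auto
    qed
    also have "\<dots> = coeff Pp N" by (simp add: coeffP)
    finally show ?thesis .
  qed
  have key: "?A * fps_of_poly Qp = fps_of_poly Pp" by (rule fps_ext) (simp only: coefN fps_of_poly_nth)
  have q0: "fps_of_poly Qp $ 0 \<noteq> 0" by (simp add: coeffQ qz_def)
  have "fps_of_poly Pp / fps_of_poly Qp = ?A"
  proof -
    have "fps_of_poly Pp / fps_of_poly Qp = fps_of_poly Pp * inverse (fps_of_poly Qp)"
      by (rule fps_divide_unit[OF q0])
    also have "\<dots> = ?A * (fps_of_poly Qp * inverse (fps_of_poly Qp))" by (simp only: key[symmetric] mult.assoc)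
    also have "\<dots> = ?A" by (simp only: inverse_mult_eq_1'[OF q0] mult_1_right)
    finally show ?thesis .
  qed
  then show ?thesis unfolding Pp_def Qp_def by simp
qed

end
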